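(* Let $n\ge1$. (1) The action of $N_{\Delta_n}\times N_{\Delta_n^*}\subset\mathbb{T}^{n+1}\times\mathbb{T}^{n+1}$ on $P$ is free and preserves $\tilde\omega_1,\tilde\omega_2,\tilde g,\tilde\omega_D$, and $\mu_1,\mu_2$ are invariant under it. (2) For $k_1<0$ and $k_2\in\mathbb{R}$, the set $\mu_1^{-1}(k_1)\cap\mu_2^{-1}(k_2)\subset P$ is nonempty if and only if $\frac{-k_1}{\pi}e^{\frac{4\pi}{n+1}k_2}\ge n+1$. (3) If $\frac{-k_1}{\pi}e^{\frac{4\pi}{n+1}k_2}> n+1$, then $d\mu_1\wedge d\mu_2\neq0$ at every point of $\mu_1^{-1}(k_1)\cap\mu_2^{-1}(k_2)$.
   Context: Write $\mathbb{T}^k=\mathbb{R}^k/\mathbb{Z}^k$. Let $u_i=e_i$ ($1\le i\le n$), $u_{n+1}=-(1,\dots,1)$, $v_i=(n+1)e_i-(1,\dots,1)$ ($1\le i\le n$), $v_{n+1}=-(1,\dots,1)$ in $\mathbb{R}^n$. Let $f_{\Delta_n},f_{\Delta_n^*}:\mathbb{T}^{n+1}\to\mathbb{T}^n$ be the homomorphisms induced by $x\mapsto\sum_ix_iu_i$ and $x\mapsto\sum_ix_iv_i$ respectively, $N_{\Delta_n}=\ker f_{\Delta_n}$, $N_{\Delta_n^*}=\ker f_{\Delta_n^*}$. Let $P=(\mathbb{C}^* )^{n+1}\times_\mu(\mathbb{C}^* )^{n+1}$, identified via global coordinates $(\theta,r,\eta)\in\mathbb{T}^{n+1}\times(\mathbb{R}_{>0})^{n+1}\times\mathbb{T}^{n+1}$.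 On $P$ let $\tilde\omega_1=2\pi\sum_j r_j\,dr_j\wedge d\theta_j$, $\tilde\omega_2=\frac1{2\pi}\sum_j\frac1{r_j}dr_j\wedge d\eta_j$, $\tilde g=\sum_j\big(dr_j^2+4\pi^2r_j^2d\theta_j^2+\frac{1}{4\pi^2r_j^2}d\eta_j^2\big)$, $\tilde\omega_D=\sum_jd\theta_j\wedge d\eta_j$. The group $\mathbb{T}^{n+1}\times\mathbb{T}^{n+1}$ acts on $P$ by translation of $\theta$ and of $\eta$ respectively. Define $\mu_1,\mu_2:P\to\mathbb{R}$ by $\mu_1=-\pi\sum_{j}r_j^2$ and $\mu_2=-\frac1{2\pi}\log\big(\prod_j r_j\big)$. *)

theory Defs
  imports Complex_Main
begin

text \<open>Coordinates on P: a point is a triple (theta, r, eta) of functions nat => real,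
  of which only the coordinates j in {1..n+1} are meaningful.  The torus T^k = R^k/Z^k is
  represented by real representatives, compared modulo integers.  Tangent vectors at a
  point are triples (d theta, d r, d eta) of the same shape.\<close>

type_synonym vec = "nat \<Rightarrow> real"
type_synonym pt = "vec \<times> vec \<times> vec"

definition idx :: "nat \<Rightarrow> nat set" where
  "idx n = {1..n+1}"

definition th :: "pt \<Rightarrow> vec" where "th p = fst p"
definition rr :: "pt \<Rightarrow> vec" where "rr p = fst (snd p)"
definition et :: "pt \<Rightarrow> vec" where "et p = snd (snd p)"

definition teq :: "nat \<Rightarrow> vec \<Rightarrow> vec \<Rightarrow> bool" where
  "teq n x y \<longleftrightarrow> (\<forall>j\<in>idx n. x j - y j \<in> \<int>)"

text \<open>The vectors u_i, v_i in R^n (coordinates k in {1..n}), i in {1..n+1}.\<close>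
definition uvec :: "nat \<Rightarrow> nat \<Rightarrow> vec" where
  "uvec n i = (if i \<le> n then (\<lambda>k. if k = i then 1 else 0) else (\<lambda>k. -1))"

definition vvec :: "nat \<Rightarrow> nat \<Rightarrow> vec" where
  "vvec n i = (if i \<le> n then (\<lambda>k. real (n+1) * (if k = i then 1 else 0) - 1) else (\<lambda>k. -1))"

definition linmap :: "(nat \<Rightarrow> nat \<Rightarrow> vec) \<Rightarrow> nat \<Rightarrow> vec \<Rightarrow> vec" where
  "linmap w n x = (\<lambda>k. \<Sum>i\<in>idx n. x i * w n i k)"

text \<open>Kernel of the induced homomorphism T^(n+1) -> T^n, as a set of representatives.\<close>
definition torus_kernel :: "(nat \<Rightarrow> nat \<Rightarrow> vec) \<Rightarrow> nat \<Rightarrow> vec set" where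
  "torus_kernel w n = {x. \<forall>k\<in>{1..n}. linmap w n x k \<in> \<int>}"

definition N_Delta :: "nat \<Rightarrow> vec set" where "N_Delta n = torus_kernel uvec n"
definition N_Delta_star :: "nat \<Rightarrow> vec set" where "N_Delta_star n = torus_kernel vvec n"

definition Pset :: "nat \<Rightarrow> pt set" where
  "Pset n = {p. \<forall>j\<in>idx n. rr p j > 0}"

definition peq :: "nat \<Rightarrow> pt \<Rightarrow> pt \<Rightarrow> bool" where
  "peq n p q \<longleftrightarrow> teq n (th p) (th q) \<and> (\<forall>j\<in>idx n. rr p j = rr q j) \<and> teq n (et p) (et q)"

definition act :: "vec \<times> vec \<Rightarrow> pt \<Rightarrow> pt" where
  "act g p = ((\<lambda>j. th p j + fst g j), rr p, (\<lambda>j. et p j + snd g j))"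

definition padd :: "pt \<Rightarrow> real \<Rightarrow> pt \<Rightarrow> pt" where
  "padd p t v = ((\<lambda>j. th p j + t * th v j), (\<lambda>j. rr p j + t * rr v j), (\<lambda>j. et p j + t * et v j))"

definition pushforward :: "nat \<Rightarrow> (pt \<Rightarrow> pt) \<Rightarrow> pt \<Rightarrow> pt \<Rightarrow> pt \<Rightarrow> bool" where
  "pushforward n \<phi> p v w \<longleftrightarrow> (\<forall>j\<in>idx n.
      ((\<lambda>t. th (\<phi> (padd p t v)) j) has_real_derivative th w j) (at 0) \<and>
      ((\<lambda>t. rr (\<phi> (padd p t v)) j) has_real_derivative rr w j) (at 0) \<and>
      ((\<lambda>t. et (\<phi> (padd p t v)) j) has_real_derivative et w j) (at 0))"

definition preserves :: "nat \<Rightarrow> (pt \<Rightarrow> pt) \<Rightarrow> (pt \<Rightarrow> pt \<Rightarrow> pt \<Rightarrow> real) \<Rightarrow> bool" where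
  "preserves n \<phi> T \<longleftrightarrow> (\<forall>p\<in>Pset n.
      (\<forall>v. \<exists>v'. pushforward n \<phi> p v v') \<and>
      (\<forall>v v' w w'. pushforward n \<phi> p v v' \<longrightarrow> pushforward n \<phi> p w w' \<longrightarrow>
          T (\<phi> p) v' w' = T p v w))"

text \<open>Forms and metric; convention (alpha wedge beta)(v,w) = alpha v * beta w - alpha w * beta v.\<close>
definition omega1 :: "nat \<Rightarrow> pt \<Rightarrow> pt \<Rightarrow> pt \<Rightarrow> real" where
  "omega1 n p v w = 2 * pi * (\<Sum>j\<in>idx n. rr p j * (rr v j * th w j - rr w j * th v j))"

definition omega2 :: "nat \<Rightarrow> pt \<Rightarrow> pt \<Rightarrow> pt \<Rightarrow> real" where
  "omega2 n p v w = 1 / (2 * pi) * (\<Sum>j\<in>idx n. (1 / rr p j) * (rr v j * et w j - rr w j * et v j))"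

definition gmetric :: "nat \<Rightarrow> pt \<Rightarrow> pt \<Rightarrow> pt \<Rightarrow> real" where
  "gmetric n p v w = (\<Sum>j\<in>idx n. rr v j * rr w j + 4 * pi\<^sup>2 * (rr p j)\<^sup>2 * th v j * th w j
       + 1 / (4 * pi\<^sup>2 * (rr p j)\<^sup>2) * et v j * et w j)"

definition omegaD :: "nat \<Rightarrow> pt \<Rightarrow> pt \<Rightarrow> pt \<Rightarrow> real" where
  "omegaD n p v w = (\<Sum>j\<in>idx n. th v j * et w j - th w j * et v j)"

definition mu1 :: "nat \<Rightarrow> pt \<Rightarrow> real" where
  "mu1 n p = - pi * (\<Sum>j\<in>idx n. (rr p j)\<^sup>2)"

definition mu2 :: "nat \<Rightarrow> pt \<Rightarrow> real" where
  "mu2 n p = - (1 / (2 * pi)) * ln (\<Prod>j\<in>idx n. rr p j)"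

definition dfun :: "(pt \<Rightarrow> real) \<Rightarrow> pt \<Rightarrow> pt \<Rightarrow> real \<Rightarrow> bool" where
  "dfun f p v d \<longleftrightarrow> ((\<lambda>t. f (padd p t v)) has_real_derivative d) (at 0)"

text \<open>(df wedge dh) at p is nonzero: it is nonzero on some pair of tangent vectors.\<close>
definition wedge_nonzero :: "(pt \<Rightarrow> real) \<Rightarrow> (pt \<Rightarrow> real) \<Rightarrow> pt \<Rightarrow> bool" where
  "wedge_nonzero f h p \<longleftrightarrow> (\<exists>v w a b c d. dfun f p v a \<and> dfun f p w b \<and> dfun h p v c \<and> dfun h p w d
       \<and> a * d - b * c \<noteq> 0)"

end

theory Submission
  imports Defs
begin


lemma act_comp:
  "th (act g (padd p t v)) j = th p j + t * th v j + fst g j"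
  "rr (act g (padd p t v)) j = rr p j + t * rr v j"
  "et (act g (padd p t v)) j = et p j + t * et v j + snd g j"
  "rr (act g p) = rr p"
  by (simp_all add: act_def padd_def th_def rr_def et_def)

lemma push_ex: "pushforward n (act g) p v v"
  unfolding pushforward_def act_comp
  by (auto simp: padd_def rr_def intro!: derivative_eq_intros)

lemma push_uniq:
  assumes "pushforward n (act g) p v w" "j \<in> idx n"
  shows "th w j = th v j \<and> rr w j = rr v j \<and> et w j = et v j"
  using assms push_ex[of n g p v] unfolding pushforward_def
  by (metis DERIV_unique)

lemma pres:
  assumes "\<And>p v w v' w'. (\<forall>j\<in>idx n. th v' j = th v j \<and> rr v' j = rr v j \<and> et v' j = et v j)
     \<Longrightarrow> (\<forall>j\<in>idx n. th w' j = th w j \<and> rr w' j = rr w j \<and> et w' j = et w j)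
     \<Longrightarrow> T (act g p) v' w' = T p v w"
  shows "preserves n (act g) T"
  unfolding preserves_def
proof (intro ballI allI conjI impI)
  fix p v show "\<exists>v'. pushforward n (act g) p v v'" using push_ex by blast
next
  fix p v v' w w' assume "pushforward n (act g) p v v'" "pushforward n (act g) p w w'"
  then show "T (act g p) v' w' = T p v w"
    using push_uniq assms by meson
qed

lemma part1:
  "(\<forall>p\<in>Pset n. peq n (act g p) p \<longrightarrow> teq n (fst g) (\<lambda>_. 0) \<and> teq n (snd g) (\<lambda>_. 0))
      \<and> preserves n (act g) (omega1 n) \<and> preserves n (act g) (omega2 n)
      \<and> preserves n (act g) (gmetric n) \<and> preserves n (act g) (omegaD n)
      \<and> (\<forall>p\<in>Pset n. mu1 n (act g p) = mu1 n p \<and> mu2 n (act g p) = mu2 n p)"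
  apply (intro conjI)
       apply (auto simp: peq_def teq_def act_def th_def et_def)[1]
      apply (rule pres, unfold omega1_def act_comp, intro arg_cong[where f="\<lambda>x. 2*pi*x"] sum.cong; simp)
     apply (rule pres, unfold omega2_def act_comp, intro arg_cong[where f="\<lambda>x. 1/(2*pi)*x"] sum.cong; simp)
    apply (rule pres, unfold gmetric_def act_comp, intro sum.cong; simp)
   apply (rule pres, unfold omegaD_def act_comp, intro sum.cong; simp)
  apply (simp add: mu1_def mu2_def act_comp)
  done


lemma idx_fin[simp]: "finite (idx n)" and idx_card[simp]: "card (idx n) = n + 1"
  by (auto simp: idx_def)

lemma amgm:
  fixes r :: "nat \<Rightarrow> real"
  assumes fin: "finite A" and ne: "A \<noteq> {}" and pos: "\<And>j. j \<in> A \<Longrightarrow> r j > 0"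
  shows "2 * ln (\<Prod>j\<in>A. r j) \<le> real (card A) * ln ((\<Sum>j\<in>A. (r j)\<^sup>2) / real (card A))"
proof -
  define S where "S = (\<Sum>j\<in>A. (r j)\<^sup>2)"
  define m where "m = S / real (card A)"
  have cA: "real (card A) > 0" using fin ne by (simp add: card_gt_0_iff)
  have S0: "S > 0" unfolding S_def by (rule sum_pos[OF fin ne]) (metis pos zero_less_power)
  have m0: "m > 0" unfolding m_def using S0 cA by simp
  have "(\<Sum>j\<in>A. ln ((r j)\<^sup>2 / m)) \<le> (\<Sum>j\<in>A. (r j)\<^sup>2 / m - 1)"
    using pos m0 by (intro sum_mono ln_le_minus_one) (metis divide_pos_pos zero_less_power)
  also have "\<dots> = S / m - card A"
    by (simp add: S_def sum_subtractf sum_divide_distrib)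
  also have "\<dots> = 0" unfolding m_def using cA S0 by simp
  finally have le: "(\<Sum>j\<in>A. ln ((r j)\<^sup>2 / m)) \<le> 0" .
  have "(\<Sum>j\<in>A. ln ((r j)\<^sup>2 / m)) = (\<Sum>j\<in>A. 2 * ln (r j) - ln m)"
  proof (intro sum.cong refl)
    fix j assume "j \<in> A"
    hence rj: "r j > 0" by (rule pos)
    show "ln ((r j)\<^sup>2 / m) = 2 * ln (r j) - ln m"
      using rj m0 by (simp add: ln_div ln_realpow)
  qed
  also have "\<dots> = 2 * ln (\<Prod>j\<in>A. r j) - card A * ln m"
  proof -
    have "ln (\<Prod>j\<in>A. r j) = (\<Sum>j\<in>A. ln (r j))"
      using fin pos by (intro ln_prod) (auto dest: pos)
    thus ?thesis by (simp add: sum_subtractf sum_distrib_left)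
  qed
  finally show ?thesis using le unfolding m_def S_def by simp
qed

lemma forward:
  assumes n: "n \<ge> 1" and p: "p \<in> Pset n" and e1: "mu1 n p = k1" and e2: "mu2 n p = k2"
  shows "(- k1 / pi) * exp (4 * pi / real (n + 1) * k2) \<ge> real (n + 1)"
proof -
  define S where "S = (\<Sum>j\<in>idx n. (rr p j)\<^sup>2)"
  define P where "P = (\<Prod>j\<in>idx n. rr p j)"
  have pos: "\<And>j. j \<in> idx n \<Longrightarrow> rr p j > 0" using p by (auto simp: Pset_def)
  have ne: "idx n \<noteq> {}" by (auto simp: idx_def)
  have S0: "S > 0" unfolding S_def by (rule sum_pos[OF idx_fin ne]) (metis pos zero_less_power)
  have k1: "- k1 / pi = S" using e1 by (auto simp: mu1_def S_def)
  have k2: "k2 = - ln P / (2 * pi)" using e2 by (auto simp: mu2_def P_def)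
  have am: "2 * ln P \<le> (n+1) * ln (S / (n+1))"
    using amgm[OF idx_fin ne pos] unfolding S_def P_def by simp
  have "4 * pi / real (n + 1) * k2 = - (2 * ln P) / (n+1)" unfolding k2 by (simp add: field_simps)
  also have "\<dots> \<ge> - ln (S / (n+1))" using am by (simp add: field_simps)
  finally have "exp (4 * pi / real (n + 1) * k2) \<ge> exp (- ln (S / (n+1)))" by simp
  also have "exp (- ln (S / (n+1))) = (n+1) / S" using S0 by (simp add: exp_minus)
  finally show ?thesis unfolding k1 using S0 by (simp add: field_simps)
qed

lemma backward:
  assumes n: "n \<ge> 1" and k1: "k1 < 0"
    and h: "(- k1 / pi) * exp (4 * pi / real (n + 1) * k2) \<ge> real (n + 1)"
  shows "\<exists>p\<in>Pset n. mu1 n p = k1 \<and> mu2 n p = k2"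
proof -
  define S where "S = - k1 / pi"
  define c where "c = exp (- 2 * pi * k2 / (n+1))"
  have S0: "S > 0" using k1 by (simp add: S_def divide_neg_pos)
  have c0: "c > 0" by (simp add: c_def)
  have lc: "4 * pi / real (n + 1) * k2 = - ln (c^2)"
    by (simp add: c_def ln_realpow field_simps)
  have "exp (4 * pi / real (n + 1) * k2) = 1 / c^2"
    unfolding lc exp_minus using c0 by (simp add: field_simps)
  hence E: "exp (4 * pi / real (n + 1) * k2) * c^2 = 1" using c0 by simp
  have "(n+1) * c^2 \<le> (S * exp (4 * pi / real (n + 1) * k2)) * c^2"
    using h unfolding S_def[symmetric] by (intro mult_right_mono) auto
  also have "\<dots> = S" using E by (simp add: mult.assoc)
  finally have hS: "(n+1) * c^2 \<le> S" .
  define f where "f = (\<lambda>a::real. n * a^2 + (c^(n+1) / a^n)^2)"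
  have "c^2 \<le> (n+1) * c^2" using mult_right_mono[of 1 "real (n+1)" "c^2"] by simp
  hence cS: "c \<le> sqrt S" using hS by (intro real_le_rsqrt) simp
  have "f c \<le> S" using hS c0 by (simp add: f_def power_add power2_eq_square field_simps)
  moreover have "S \<le> f (sqrt S)"
  proof -
    have "S \<le> n * S" using n S0 by simp
    also have "\<dots> \<le> f (sqrt S)" using S0 by (simp add: f_def)
    finally show ?thesis .
  qed
  moreover have "\<forall>x. c \<le> x \<and> x \<le> sqrt S \<longrightarrow> isCont f x"
    using c0 unfolding f_def by (auto intro!: continuous_intros)
  ultimately obtain a where a: "c \<le> a" "a \<le> sqrt S" "f a = S"
    using IVT[of f c S "sqrt S"] cS by blast
  have a0: "a > 0" using a c0 by simp
  define b where "b = c^(n+1) / a^n"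
  have b0: "b > 0" using a0 c0 by (simp add: b_def)
  define p :: pt where "p = ((\<lambda>_. 0), (\<lambda>j. if j \<le> n then a else b), (\<lambda>_. 0))"
  have rp: "rr p = (\<lambda>j. if j \<le> n then a else b)" by (simp add: p_def rr_def)
  have "p \<in> Pset n" using a0 b0 by (simp add: Pset_def rp)
  moreover have "mu1 n p = k1"
  proof -
    have "(\<Sum>j\<in>idx n. (rr p j)\<^sup>2) = (\<Sum>j\<in>{1..n}. (rr p j)\<^sup>2) + b^2"
      using n by (simp add: idx_def sum.cl_ivl_Suc rp)
    also have "(\<Sum>j\<in>{1..n}. (rr p j)\<^sup>2) = (\<Sum>j\<in>{1..n}. a^2)" by (intro sum.cong) (auto simp: rp)
    finally have "(\<Sum>j\<in>idx n. (rr p j)\<^sup>2) = S" using a(3) by (simp add: f_def b_def)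
    thus ?thesis by (simp add: mu1_def S_def)
  qed
  moreover have "mu2 n p = k2"
  proof -
    have "(\<Prod>j\<in>idx n. rr p j) = (\<Prod>j\<in>{1..n}. rr p j) * b"
      using n by (simp add: idx_def prod.cl_ivl_Suc rp)
    also have "(\<Prod>j\<in>{1..n}. rr p j) = (\<Prod>j\<in>{1..n}. a)" by (intro prod.cong) (auto simp: rp)
    finally have "(\<Prod>j\<in>idx n. rr p j) = c^(n+1)" using a0 by (simp add: b_def)
    moreover have "ln (c^(n+1)) = (n+1) * ln c" using c0 by (simp only: ln_realpow)
    ultimately have "ln (\<Prod>j\<in>idx n. rr p j) = (n+1) * ln c" by simp
    also have "\<dots> = - 2 * pi * k2" by (simp add: c_def)
    finally show ?thesis by (simp add: mu2_def)
  qed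
  ultimately show ?thesis by blast
qed



definition ev :: "nat \<Rightarrow> pt" where
  "ev i = ((\<lambda>_. 0), (\<lambda>j. if j = i then 1 else 0), (\<lambda>_. 0))"

lemma rr_padd_ev: "rr (padd p t (ev i)) = (\<lambda>j. rr p j + (if j = i then t else 0))"
  by (auto simp: padd_def ev_def rr_def)

lemma d_mu1:
  assumes "i \<in> idx n"
  shows "dfun (mu1 n) p (ev i) (- pi * (2 * rr p i))"
proof -
  define C where "C = (\<Sum>j\<in>idx n - {i}. (rr p j)\<^sup>2)"
  have eq: "mu1 n (padd p t (ev i)) = - pi * ((rr p i + t)\<^sup>2 + C)" for t
  proof -
    have "(\<Sum>j\<in>idx n. (rr (padd p t (ev i)) j)\<^sup>2) = (rr p i + t)\<^sup>2 + (\<Sum>j\<in>idx n - {i}. (rr (padd p t (ev i)) j)\<^sup>2)"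
      using assms by (subst sum.remove[of _ i]) (auto simp: rr_padd_ev)
    also have "(\<Sum>j\<in>idx n - {i}. (rr (padd p t (ev i)) j)\<^sup>2) = C"
      unfolding C_def by (intro sum.cong) (auto simp: rr_padd_ev)
    finally show ?thesis by (simp add: mu1_def)
  qed
  show ?thesis unfolding dfun_def eq
    by (auto intro!: derivative_eq_intros)
qed

lemma d_mu2:
  assumes "i \<in> idx n" "p \<in> Pset n"
  shows "dfun (mu2 n) p (ev i) (- (1 / (2 * pi)) * (1 / rr p i))"
proof -
  define C where "C = (\<Prod>j\<in>idx n - {i}. rr p j)"
  have pos: "\<And>j. j \<in> idx n \<Longrightarrow> rr p j > 0" using assms by (auto simp: Pset_def)
  have C0: "C > 0" unfolding C_def by (rule prod_pos) (auto intro: pos)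
  have ri: "rr p i > 0" using pos assms by simp
  have eq: "mu2 n (padd p t (ev i)) = - (1 / (2 * pi)) * ln ((rr p i + t) * C)" for t
  proof -
    have "(\<Prod>j\<in>idx n. rr (padd p t (ev i)) j) = (rr p i + t) * (\<Prod>j\<in>idx n - {i}. rr (padd p t (ev i)) j)"
      using assms by (subst prod.remove[of _ i]) (auto simp: rr_padd_ev)
    also have "(\<Prod>j\<in>idx n - {i}. rr (padd p t (ev i)) j) = C"
      unfolding C_def by (intro prod.cong) (auto simp: rr_padd_ev)
    finally show ?thesis by (simp add: mu2_def)
  qed
  show ?thesis unfolding dfun_def eq
    using ri C0 by (auto intro!: derivative_eq_intros simp: field_simps)
qed

lemma wedge:
  assumes "i \<in> idx n" "k \<in> idx n" "p \<in> Pset n" "rr p i \<noteq> rr p k"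
  shows "wedge_nonzero (mu1 n) (mu2 n) p"
proof -
  have pos: "\<And>j. j \<in> idx n \<Longrightarrow> rr p j > 0" using assms by (auto simp: Pset_def)
  have ri: "rr p i > 0" and rk: "rr p k > 0" using pos assms by auto
  have sq: "(rr p i)^2 \<noteq> (rr p k)^2" using ri rk assms(4)
    by (metis less_eq_real_def power2_eq_imp_eq)
  have ne: "(- pi * (2 * rr p i)) * (- (1 / (2 * pi)) * (1 / rr p k))
      - (- pi * (2 * rr p k)) * (- (1 / (2 * pi)) * (1 / rr p i)) \<noteq> 0"
  proof
    assume "(- pi * (2 * rr p i)) * (- (1 / (2 * pi)) * (1 / rr p k))
      - (- pi * (2 * rr p k)) * (- (1 / (2 * pi)) * (1 / rr p i)) = 0"
    hence "rr p i / rr p k - rr p k / rr p i = 0" by (simp add: field_simps)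
    hence "(rr p i)^2 = (rr p k)^2" using ri rk by (simp add: field_simps power2_eq_square)
    thus False using sq by simp
  qed
  show ?thesis unfolding wedge_nonzero_def
    using d_mu1[OF assms(1)] d_mu1[OF assms(2)] d_mu2[OF assms(1,3)] d_mu2[OF assms(2,3)] ne
    by blast
qed

lemma part3:
  assumes n: "n \<ge> 1" and h: "(- k1 / pi) * exp (4 * pi / real (n + 1) * k2) > real (n + 1)"
    and p: "p \<in> Pset n" and e1: "mu1 n p = k1" and e2: "mu2 n p = k2"
  shows "wedge_nonzero (mu1 n) (mu2 n) p"
proof (cases "\<exists>i\<in>idx n. \<exists>k\<in>idx n. rr p i \<noteq> rr p k")
  case True thus ?thesis using wedge p by blast
next
  case False
  define r where "r = rr p 1"
  have one: "1 \<in> idx n" by (simp add: idx_def)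
  have all: "\<And>j. j \<in> idx n \<Longrightarrow> rr p j = r" using False one unfolding r_def by blast
  have r0: "r > 0" using p one by (auto simp: Pset_def r_def)
  have "k1 = - pi * ((n+1) * r^2)" using e1 all by (simp add: mu1_def)
  hence k1: "- k1 / pi = (n+1) * r^2" by simp
  have "(\<Prod>j\<in>idx n. rr p j) = r^(n+1)" using all by simp
  moreover have "ln (r^(n+1)) = (n+1) * ln r" using r0 by (simp only: ln_realpow)
  ultimately have "k2 = - (1 / (2 * pi)) * ((n+1) * ln r)" using e2 unfolding mu2_def by simp
  hence "4 * pi / real (n + 1) * k2 = - ln (r^2)" using r0 by (simp add: ln_realpow field_simps)
  hence "exp (4 * pi / real (n + 1) * k2) = 1 / r^2" using r0 by (simp add: exp_minus inverse_eq_divide)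
  hence "(- k1 / pi) * exp (4 * pi / real (n + 1) * k2) = n + 1" unfolding k1 using r0 by simp
  thus ?thesis using h by simp
qed

theorem mainTheorem5:
  fixes n :: nat
  assumes "n \<ge> 1"
  shows
   "(\<forall>g\<in>N_Delta n \<times> N_Delta_star n.
        (\<forall>p\<in>Pset n. peq n (act g p) p \<longrightarrow> teq n (fst g) (\<lambda>_. 0) \<and> teq n (snd g) (\<lambda>_. 0))
      \<and> preserves n (act g) (omega1 n) \<and> preserves n (act g) (omega2 n)
      \<and> preserves n (act g) (gmetric n) \<and> preserves n (act g) (omegaD n)
      \<and> (\<forall>p\<in>Pset n. mu1 n (act g p) = mu1 n p \<and> mu2 n (act g p) = mu2 n p))
    \<and> (\<forall>k1 k2 :: real. k1 < 0 \<longrightarrow>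
        ({p\<in>Pset n. mu1 n p = k1 \<and> mu2 n p = k2} \<noteq> {} \<longleftrightarrow>
         (- k1 / pi) * exp (4 * pi / real (n + 1) * k2) \<ge> real (n + 1)))
    \<and> (\<forall>k1 k2 :: real. (- k1 / pi) * exp (4 * pi / real (n + 1) * k2) > real (n + 1) \<longrightarrow>
        (\<forall>p\<in>{p\<in>Pset n. mu1 n p = k1 \<and> mu2 n p = k2}. wedge_nonzero (mu1 n) (mu2 n) p))"
proof -
  have A: "\<forall>g\<in>N_Delta n \<times> N_Delta_star n.
        (\<forall>p\<in>Pset n. peq n (act g p) p \<longrightarrow> teq n (fst g) (\<lambda>_. 0) \<and> teq n (snd g) (\<lambda>_. 0))
      \<and> preserves n (act g) (omega1 n) \<and> preserves n (act g) (omega2 n)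
      \<and> preserves n (act g) (gmetric n) \<and> preserves n (act g) (omegaD n)
      \<and> (\<forall>p\<in>Pset n. mu1 n (act g p) = mu1 n p \<and> mu2 n (act g p) = mu2 n p)"
    by (intro ballI part1)
  have B: "\<forall>k1 k2 :: real. k1 < 0 \<longrightarrow>
        ({p\<in>Pset n. mu1 n p = k1 \<and> mu2 n p = k2} \<noteq> {} \<longleftrightarrow>
         (- k1 / pi) * exp (4 * pi / real (n + 1) * k2) \<ge> real (n + 1))"
  proof (intro allI impI)
    fix k1 k2 :: real assume k1: "k1 < 0"
    have f: "\<And>p. p \<in> Pset n \<Longrightarrow> mu1 n p = k1 \<Longrightarrow> mu2 n p = k2 \<Longrightarrow>
        (- k1 / pi) * exp (4 * pi / real (n + 1) * k2) \<ge> real (n + 1)"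
      using forward[OF assms] by blast
    show "({p\<in>Pset n. mu1 n p = k1 \<and> mu2 n p = k2} \<noteq> {} \<longleftrightarrow>
         (- k1 / pi) * exp (4 * pi / real (n + 1) * k2) \<ge> real (n + 1))"
    proof
      assume "{p\<in>Pset n. mu1 n p = k1 \<and> mu2 n p = k2} \<noteq> {}"
      then obtain p where "p \<in> Pset n" "mu1 n p = k1" "mu2 n p = k2" by blast
      thus "(- k1 / pi) * exp (4 * pi / real (n + 1) * k2) \<ge> real (n + 1)" by (rule f)
    next
      assume "(- k1 / pi) * exp (4 * pi / real (n + 1) * k2) \<ge> real (n + 1)"
      then obtain p where "p \<in> Pset n" "mu1 n p = k1" "mu2 n p = k2"
        using backward[OF assms k1] by blast
      thus "{p\<in>Pset n. mu1 n p = k1 \<and> mu2 n p = k2} \<noteq> {}" by blast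
    qed
  qed
  have C: "\<forall>k1 k2 :: real. (- k1 / pi) * exp (4 * pi / real (n + 1) * k2) > real (n + 1) \<longrightarrow>
        (\<forall>p\<in>{p\<in>Pset n. mu1 n p = k1 \<and> mu2 n p = k2}. wedge_nonzero (mu1 n) (mu2 n) p)"
  proof (intro allI impI ballI)
    fix k1 k2 :: real and p
    assume h: "(- k1 / pi) * exp (4 * pi / real (n + 1) * k2) > real (n + 1)"
      and p: "p \<in> {p\<in>Pset n. mu1 n p = k1 \<and> mu2 n p = k2}"
    from p have "p \<in> Pset n" "mu1 n p = k1" "mu2 n p = k2" by auto
    thus "wedge_nonzero (mu1 n) (mu2 n) p" by (rule part3[OF assms h])
  qed
  show ?thesis by (rule conjI[OF A conjI[OF B C]])
qed

end
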